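(* Let $X \subset \mathbb{R}^{2n}$ be a symplectically self-polar convex body with $C^1$-smooth boundary, $T$ its symplectic outer billiard map, and $Y=\{x+f(x): x\in\partial X\}$. Then $Y\subset\mathbb{R}^{2n}\setminus X$ and $T(Y)=Y$; more precisely $T(x+f(x))=f(x)+f(f(x))$ for every $x\in\partial X$.
   Context: $\mathbb{R}^{2n}\cong\mathbb{C}^n$, $J$ is multiplication by $\sqrt{-1}$, $\omega(u,v)=\langle Ju,v\rangle$. For a convex body $X$ with origin in its interior, $X^\omega=\{y: \omega(x,y)\le 1\ \forall x\in X\}$; $X$ is symplectically self-polar if $X=X^\omega$. For $C^1$ boundary, $f\colon\partial X\to\partial X^\omega$ assigns to $x$ the unique $f(x)\in X^\omega$ with $\omega(x,f(x))=1$. Symplectic outer billiard map: for a strictly convex body $X$ with $C^1$ boundary and $z\notin X$, there is a unique $x\in\partial X$ such that the line through $z,x$ is the characteristic line $\ker(\omega|_{T_x\partial X})$ and $\omega(x,x-z)>0$; then $T(z)=2x-z$. *)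

theory Defs
  imports "HOL-Analysis.Analysis"
begin

text \<open>R^{2n} is identified with C^n = complex^'n; the real inner product is the
  standard one (sum of Re (x_i * cnj y_i)).\<close>

definition J :: "complex^'n \<Rightarrow> complex^'n" where
  "J u = (\<chi> i. \<i> * (u $ i))"

definition symp :: "complex^'n \<Rightarrow> complex^'n \<Rightarrow> real" where
  "symp u v = inner (J u) v"

definition convex_body :: "(complex^'n) set \<Rightarrow> bool" where
  "convex_body X \<longleftrightarrow> compact X \<and> convex X \<and> 0 \<in> interior X"

definition symp_polar :: "(complex^'n) set \<Rightarrow> (complex^'n) set" where
  "symp_polar X = {y. \<forall>x\<in>X. symp x y \<le> 1}"

definition C1_boundary :: "(complex^'n) set \<Rightarrow> bool" where
  "C1_boundary X \<longleftrightarrow> (\<forall>x\<in>frontier X. \<exists>U g G. open U \<and> x \<in> U \<and>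
      (\<forall>y\<in>U. (g has_derivative (\<lambda>v. inner (G y) v)) (at y)) \<and>
      continuous_on U G \<and> G x \<noteq> 0 \<and>
      frontier X \<inter> U = {y\<in>U. g y = (0::real)})"

definition tangent_space :: "(complex^'n) set \<Rightarrow> complex^'n \<Rightarrow> (complex^'n) set" where
  "tangent_space S x = {v. \<exists>\<gamma> e. e > 0 \<and> \<gamma> 0 = x \<and> (\<forall>t\<in>{-e<..<e}. \<gamma> t \<in> S) \<and>
      (\<gamma> has_vector_derivative v) (at (0::real))}"

definition char_line :: "(complex^'n) set \<Rightarrow> complex^'n \<Rightarrow> (complex^'n) set" where
  "char_line X x = {u \<in> tangent_space (frontier X) x.
      \<forall>v\<in>tangent_space (frontier X) x. symp u v = 0}"

definition polar_map :: "(complex^'n) set \<Rightarrow> complex^'n \<Rightarrow> complex^'n" where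
  "polar_map X x = (THE y. y \<in> symp_polar X \<and> symp x y = 1)"

text \<open>Symplectic outer billiard map: the line through z and x is x + char_line X x,
  i.e. z - x lies in the characteristic line (z \<noteq> x as z is outside X).\<close>
definition outer_billiard :: "(complex^'n) set \<Rightarrow> complex^'n \<Rightarrow> complex^'n" where
  "outer_billiard X z = (let x = (THE x. x \<in> frontier X \<and> z - x \<in> char_line X x
       \<and> symp x (x - z) > 0) in 2 *\<^sub>R x - z)"

end

theory Submission
  imports Defs
begin

lemma J_inner_J: "inner (J u) (J v) = inner u (v::complex^'n)"
  by (simp add: J_def inner_vec_def inner_complex_def algebra_simps)
lemma J_skew: "inner (J u) v = - inner u (J (v::complex^'n))"
  by (simp add: J_def inner_vec_def inner_complex_def algebra_simps sum_negf[symmetric])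
lemma J_self: "inner (J u) (u::complex^'n) = 0"
  by (simp add: J_def inner_vec_def inner_complex_def algebra_simps)
lemma J_J: "J (J u) = - (u::complex^'n)"
  by (simp add: J_def vec_eq_iff)
lemma J_add: "J (u + v) = J u + J (v::complex^'n)"
  by (simp add: J_def vec_eq_iff algebra_simps)
lemma J_diff: "J (u - v) = J u - J (v::complex^'n)"
  by (simp add: J_def vec_eq_iff algebra_simps)
lemma J_minus: "J (- u) = - J (u::complex^'n)"
  by (simp add: J_def vec_eq_iff)
lemma J_scale: "J (c *\<^sub>R u) = c *\<^sub>R J (u::complex^'n)"
  by (simp add: J_def vec_eq_iff scaleR_conv_of_real)
lemma J_zero_iff: "J u = 0 \<longleftrightarrow> (u::complex^'n) = 0"
  by (simp add: J_def vec_eq_iff)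
lemma symp_anti: "symp u v = - symp v (u::complex^'n)"
  unfolding symp_def using J_skew[of u v] inner_commute[of u "J v"] by simp
lemma symp_self: "symp u (u::complex^'n) = 0"
  by (simp add: symp_def J_self)
lemma negJ_inner: "inner (- J y) w = symp w (y::complex^'n)"
  unfolding symp_def using J_skew[of y w] inner_commute[of y "J w"] by simp

lemma orth_parallel:
  fixes a b :: "'a::real_inner"
  assumes a: "a \<noteq> 0" and h: "\<forall>v. inner a v = 0 \<longrightarrow> inner b v = 0"
  shows "b = (inner b a / inner a a) *\<^sub>R a"
proof -
  define c where "c = inner b a / inner a a"
  define v where "v = b - c *\<^sub>R a"
  have aa: "inner a a \<noteq> 0" using a by simp
  have "inner a v = inner a b - c * inner a a" by (simp add: v_def inner_diff_right)
  also have "\<dots> = 0" using aa by (simp add: c_def inner_commute)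
  finally have av: "inner a v = 0" .
  then have bv: "inner b v = 0" using h by blast
  have "inner v v = inner b v - c * inner a v"
    by (simp add: v_def inner_diff_left inner_commute)
  then have "inner v v = 0" using av bv by simp
  then have "v = 0" by simp
  then show ?thesis by (simp add: v_def c_def)
qed

lemma tangent_sub_normal:
  fixes S X :: "(complex^'n) set"
  assumes SX: "S \<subseteq> X" and N: "\<forall>w\<in>X. inner N w \<le> inner N p"
    and v: "v \<in> tangent_space S p"
  shows "inner N v = 0"
proof -
  obtain \<gamma> e where e: "e > 0" "\<gamma> 0 = p" "\<forall>t\<in>{-e<..<e}. \<gamma> t \<in> S"
    and d: "(\<gamma> has_vector_derivative v) (at 0)"
    using v unfolding tangent_space_def by blast
  have "((\<lambda>t. inner N (\<gamma> t)) has_derivative (\<lambda>t. inner N (t *\<^sub>R v))) (at 0)"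
    using has_derivative_inner_right[OF d[unfolded has_vector_derivative_def]] .
  moreover have "(\<lambda>t. inner N (t *\<^sub>R v)) = (*) (inner N v)"
    by (simp add: fun_eq_iff)
  ultimately have "DERIV (\<lambda>t. inner N (\<gamma> t)) 0 :> inner N v"
    by (simp add: has_field_derivative_def)
  moreover have "\<forall>y. \<bar>0 - y\<bar> < e \<longrightarrow> inner N (\<gamma> y) \<le> inner N (\<gamma> 0)"
  proof (intro allI impI)
    fix y :: real assume "\<bar>0 - y\<bar> < e"
    then have "y \<in> {-e<..<e}" by auto
    then have "\<gamma> y \<in> S" using e(3) by blast
    then show "inner N (\<gamma> y) \<le> inner N (\<gamma> 0)" using SX N e by auto
  qed
  ultimately show ?thesis using DERIV_local_max e(1) by blast
qed

lemma tangent_super: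
  fixes S :: "(complex^'n) set" and g :: "complex^'n \<Rightarrow> real"
  assumes S: "closed S" and pS: "p \<in> S" and U: "open U" "p \<in> U"
    and gd: "\<forall>y\<in>U. (g has_derivative (\<lambda>v. inner (G y) v)) (at y)"
    and SU: "S \<inter> U = {y\<in>U. g y = 0}" and G0: "G p \<noteq> 0" and v: "inner (G p) v = 0"
  shows "v \<in> tangent_space S p"
proof -
  define a where "a = G p"
  have gp: "g p = 0" using SU pS U by blast
  have gcont: "continuous_on U g" using gd
    by (meson continuous_at_imp_continuous_on has_derivative_continuous)
  have gda: "(g has_derivative (\<lambda>h. inner a h)) (at p)" using gd U a_def by auto
  have na: "norm a > 0" using G0 a_def by simp
  have av: "inner a v = 0" using v a_def by simp
  obtain r where r: "r > 0" "ball p r \<subseteq> U" using U open_contains_ball by blast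
  have key: "\<exists>\<delta>>0. \<forall>t. 0 < \<bar>t\<bar> \<and> \<bar>t\<bar> < \<delta> \<longrightarrow> (\<exists>q\<in>S. norm (q - (p + t *\<^sub>R v)) \<le> \<epsilon> * \<bar>t\<bar>)"
    if \<epsilon>: "\<epsilon> > 0" for \<epsilon>
  proof -
    define K where "K = norm v + \<epsilon> + 1"
    have K: "K > 0" "norm v + \<epsilon> < K" using \<epsilon> by (auto simp: K_def intro: add_nonneg_pos)
    define \<eta> where "\<eta> = \<epsilon> * norm a / K"
    have \<eta>: "\<eta> > 0" using \<epsilon> na K by (simp add: \<eta>_def)
    have \<eta>K: "\<eta> * (norm v + \<epsilon>) < \<epsilon> * norm a"
    proof -
      have "\<eta> * (norm v + \<epsilon>) < \<eta> * K" using \<eta> K by simp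
      also have "\<eta> * K = \<epsilon> * norm a" using K by (simp add: \<eta>_def)
      finally show ?thesis .
    qed
    obtain d where d: "d > 0" and dd: "\<forall>x'. 0 < norm (x' - p) \<and> norm (x' - p) < d \<longrightarrow>
        norm (g x' - g p - inner a (x' - p)) / norm (x' - p) < \<eta>"
      using gda[unfolded has_derivative_at'] \<eta> by blast
    have errb: "\<bar>g x' - inner a (x' - p)\<bar> \<le> \<eta> * norm (x' - p)" if "norm (x' - p) < d" for x'
    proof (cases "x' = p")
      case True then show ?thesis using gp by simp
    next
      case False
      then have pos: "0 < norm (x' - p)" by simp
      then have "norm (g x' - g p - inner a (x' - p)) / norm (x' - p) < \<eta>" using dd that by blast
      then have "norm (g x' - g p - inner a (x' - p)) < \<eta> * norm (x' - p)"
        using pos by (simp add: divide_less_eq)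
      then show ?thesis using gp by simp
    qed
    define \<delta> where "\<delta> = min d r / K"
    show ?thesis
    proof (intro exI[of _ \<delta>] conjI allI impI)
      show "\<delta> > 0" using d r K by (simp add: \<delta>_def)
      fix t :: real assume t: "0 < \<bar>t\<bar> \<and> \<bar>t\<bar> < \<delta>"
      define s0 where "s0 = \<epsilon> * \<bar>t\<bar> / norm a"
      have s0: "s0 > 0" using t \<epsilon> na by (simp add: s0_def)
      have s0a: "s0 * norm a = \<epsilon> * \<bar>t\<bar>" using na by (simp add: s0_def)
      define w where "w = (\<lambda>s::real. p + t *\<^sub>R v + s *\<^sub>R a)"
      have tK: "\<bar>t\<bar> * K < min d r" using t K by (simp add: \<delta>_def pos_less_divide_eq mult.commute)
      have wn: "norm (w s - p) \<le> \<bar>t\<bar> * (norm v + \<epsilon>)" if "\<bar>s\<bar> \<le> s0" for s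
      proof -
        have "norm (w s - p) = norm (t *\<^sub>R v + s *\<^sub>R a)" by (simp add: w_def)
        also have "\<dots> \<le> \<bar>t\<bar> * norm v + \<bar>s\<bar> * norm a"
          using norm_triangle_ineq[of "t *\<^sub>R v" "s *\<^sub>R a"] by simp
        also have "\<bar>s\<bar> * norm a \<le> s0 * norm a" using that na by (simp add: mult_right_mono)
        finally show ?thesis using s0a by (simp add: algebra_simps)
      qed
      have wlt: "norm (w s - p) < min d r" if "\<bar>s\<bar> \<le> s0" for s
      proof -
        have "\<bar>t\<bar> * (norm v + \<epsilon>) \<le> \<bar>t\<bar> * K" using K by (simp add: mult_left_mono)
        then show ?thesis using wn[OF that] tK by linarith
      qed
      have wU: "w s \<in> U" if "\<bar>s\<bar> \<le> s0" for s
      proof -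
        have "dist p (w s) < r" using wlt[OF that] by (simp add: dist_norm norm_minus_commute)
        then show ?thesis using r by auto
      qed
      have inw: "inner a (w s - p) = s * (norm a)^2" for s
        by (simp add: w_def inner_add_right av power2_norm_eq_inner)
      have gw: "\<bar>g (w s) - s * (norm a)^2\<bar> \<le> \<eta> * (\<bar>t\<bar> * (norm v + \<epsilon>))" if "\<bar>s\<bar> \<le> s0" for s
      proof -
        have "\<bar>g (w s) - s * (norm a)^2\<bar> \<le> \<eta> * norm (w s - p)"
          using errb[of "w s"] wlt[OF that] inw[of s] by simp
        also have "\<dots> \<le> \<eta> * (\<bar>t\<bar> * (norm v + \<epsilon>))" using wn[OF that] \<eta> by (simp add: mult_left_mono)
        finally show ?thesis .
      qed
      have s0sq: "s0 * (norm a)^2 = \<epsilon> * \<bar>t\<bar> * norm a" using s0a by (simp add: power2_eq_square)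
      have errlt: "\<eta> * (\<bar>t\<bar> * (norm v + \<epsilon>)) < \<epsilon> * \<bar>t\<bar> * norm a"
      proof -
        have "\<bar>t\<bar> * (\<eta> * (norm v + \<epsilon>)) < \<bar>t\<bar> * (\<epsilon> * norm a)" using \<eta>K t by simp
        then show ?thesis by (simp add: algebra_simps)
      qed
      have gpos: "g (w s0) \<ge> 0" using gw[of s0] s0 s0sq errlt by simp
      have gneg: "g (w (-s0)) \<le> 0" using gw[of "-s0"] s0 s0sq errlt by simp
      have wcont: "continuous_on {-s0..s0} w" unfolding w_def by (intro continuous_intros)
      have "continuous_on {-s0..s0} (\<lambda>s. g (w s))"
      proof -
        have "w ` {-s0..s0} \<subseteq> U" using wU by (auto simp: abs_le_iff)
        then show ?thesis using continuous_on_compose2[OF gcont wcont] by blast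
      qed
      then obtain s where s: "-s0 \<le> s" "s \<le> s0" "g (w s) = 0"
        using IVT'[of "\<lambda>s. g (w s)" "-s0" 0 s0] gpos gneg s0 by auto
      have sabs: "\<bar>s\<bar> \<le> s0" using s by simp
      have "w s \<in> S" using SU wU[OF sabs] s(3) by blast
      moreover have "norm (w s - (p + t *\<^sub>R v)) \<le> \<epsilon> * \<bar>t\<bar>"
      proof -
        have "norm (w s - (p + t *\<^sub>R v)) = \<bar>s\<bar> * norm a" by (simp add: w_def)
        also have "\<dots> \<le> s0 * norm a" using sabs na by (simp add: mult_right_mono)
        finally show ?thesis using s0a by simp
      qed
      ultimately show "\<exists>q\<in>S. norm (q - (p + t *\<^sub>R v)) \<le> \<epsilon> * \<bar>t\<bar>" by blast
    qed
  qed
  define \<gamma> where "\<gamma> = (\<lambda>t::real. SOME q. q \<in> S \<and> (\<forall>y\<in>S. dist (p + t *\<^sub>R v) q \<le> dist (p + t *\<^sub>R v) y))"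
  have \<gamma>: "\<gamma> t \<in> S \<and> (\<forall>y\<in>S. dist (p + t *\<^sub>R v) (\<gamma> t) \<le> dist (p + t *\<^sub>R v) y)" for t
  proof -
    obtain q where "q \<in> S" "\<And>y. y \<in> S \<Longrightarrow> dist (p + t *\<^sub>R v) q \<le> dist (p + t *\<^sub>R v) y"
      using distance_attains_inf[OF S, of "p + t *\<^sub>R v"] pS by blast
    then have "\<exists>q. q \<in> S \<and> (\<forall>y\<in>S. dist (p + t *\<^sub>R v) q \<le> dist (p + t *\<^sub>R v) y)" by blast
    then show ?thesis unfolding \<gamma>_def by (rule someI_ex)
  qed
  have \<gamma>0: "\<gamma> 0 = p" using \<gamma>[of 0] pS by force
  have "(\<gamma> has_derivative (\<lambda>t. t *\<^sub>R v)) (at 0)"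
    unfolding has_derivative_at'
  proof (intro conjI allI impI)
    show "bounded_linear (\<lambda>t::real. t *\<^sub>R v)" by (rule bounded_linear_scaleR_left)
    fix \<epsilon> :: real assume \<epsilon>: "\<epsilon> > 0"
    obtain \<delta> where \<delta>: "\<delta> > 0" and h: "\<forall>t. 0 < \<bar>t\<bar> \<and> \<bar>t\<bar> < \<delta> \<longrightarrow> (\<exists>q\<in>S. norm (q - (p + t *\<^sub>R v)) \<le> \<epsilon>/2 * \<bar>t\<bar>)"
      using key[of "\<epsilon>/2"] \<epsilon> by auto
    show "\<exists>d>0. \<forall>x'. 0 < norm (x' - 0) \<and> norm (x' - 0) < d \<longrightarrow>
        norm (\<gamma> x' - \<gamma> 0 - (x' - 0) *\<^sub>R v) / norm (x' - 0) < \<epsilon>"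
    proof (intro exI[of _ \<delta>] conjI allI impI)
      show "\<delta> > 0" by (rule \<delta>)
      fix t :: real assume t: "0 < norm (t - 0) \<and> norm (t - 0) < \<delta>"
      then obtain q where q: "q \<in> S" "norm (q - (p + t *\<^sub>R v)) \<le> \<epsilon>/2 * \<bar>t\<bar>" using h by auto
      have "norm (\<gamma> t - \<gamma> 0 - (t - 0) *\<^sub>R v) = dist (p + t *\<^sub>R v) (\<gamma> t)"
        using \<gamma>0 by (simp add: dist_norm norm_minus_commute algebra_simps)
      also have "\<dots> \<le> dist (p + t *\<^sub>R v) q" using \<gamma> q(1) by blast
      also have "\<dots> \<le> \<epsilon>/2 * \<bar>t\<bar>" using q(2) by (simp add: dist_norm norm_minus_commute)
      also have "\<dots> < \<epsilon> * \<bar>t\<bar>" using \<epsilon> t by simp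
      finally show "norm (\<gamma> t - \<gamma> 0 - (t - 0) *\<^sub>R v) / norm (t - 0) < \<epsilon>"
        using t by (simp add: divide_less_eq)
    qed
  qed
  then have vd: "(\<gamma> has_vector_derivative v) (at 0)" by (simp add: has_vector_derivative_def)
  have inS: "\<forall>t\<in>{-1<..<1}. \<gamma> t \<in> S" using \<gamma> by blast
  show ?thesis unfolding tangent_space_def
  proof (intro CollectI exI[of _ \<gamma>] exI[of _ "1::real"] conjI)
    show "(1::real) > 0" by simp
    show "\<gamma> 0 = p" by (rule \<gamma>0)
    show "\<forall>t\<in>{-1<..<1}. \<gamma> t \<in> S" by (rule inS)
    show "(\<gamma> has_vector_derivative v) (at 0)" by (rule vd)
  qed
qed


lemma ball_step:
  fixes p d :: "'a::real_normed_vector"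
  assumes "ball p r \<subseteq> S" "r > 0" "d \<noteq> 0"
  shows "p + (r/2/norm d) *\<^sub>R d \<in> S"
proof -
  have "dist p (p + (r/2/norm d) *\<^sub>R d) = r/2" using assms by (simp add: dist_norm)
  then show ?thesis using assms by auto
qed

locale SPB =
  fixes X :: "(complex^'n) set"
  assumes cb: "convex_body X" and sp: "symp_polar X = X" and c1: "C1_boundary X"
begin

lemma cpt: "compact X" and cvx: "convex X" and zint: "0 \<in> interior X"
  using cb by (auto simp: convex_body_def)

lemma closedX: "closed X" using cpt compact_imp_closed by blast

lemma frontier_iff: "p \<in> frontier X \<longleftrightarrow> p \<in> X \<and> p \<notin> interior X"
  by (simp add: frontier_def closure_closed closedX)

lemma frontier_sub: "frontier X \<subseteq> X" using frontier_iff by blast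

lemma frontier_nz: "p \<in> frontier X \<Longrightarrow> p \<noteq> 0" using frontier_iff zint by blast

lemma polar_le: "x \<in> X \<Longrightarrow> y \<in> X \<Longrightarrow> symp x y \<le> 1"
proof -
  assume "x \<in> X" "y \<in> X"
  then have "y \<in> symp_polar X" using sp by simp
  then show ?thesis using \<open>x \<in> X\<close> by (simp add: symp_polar_def)
qed

lemma inpolar: "(\<And>x. x \<in> X \<Longrightarrow> symp x y \<le> 1) \<Longrightarrow> y \<in> X"
proof -
  assume "\<And>x. x \<in> X \<Longrightarrow> symp x y \<le> 1"
  then have "y \<in> symp_polar X" by (simp add: symp_polar_def)
  then show ?thesis using sp by simp
qed

lemma symp_neg_right: "symp w (- x) = symp x (w::complex^'n)"
  using symp_anti[of w x] by (simp add: symp_def)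

lemma neg_mem: "x \<in> X \<Longrightarrow> -x \<in> X"
  by (rule inpolar) (simp add: symp_neg_right polar_le)

lemma not_interior:
  assumes p: "p \<in> X" and y: "y \<in> X" and py: "symp p y = 1"
  shows "p \<in> frontier X \<and> y \<in> frontier X"
proof -
  have yn: "y \<noteq> 0" using py by (auto simp: symp_def)
  have pn: "p \<noteq> 0"
  proof
    assume "p = 0" then show False using py J_zero_iff[of p] by (simp add: symp_def)
  qed
  have "p \<notin> interior X"
  proof
    assume "p \<in> interior X"
    then obtain r where r: "r > 0" "ball p r \<subseteq> X" by (auto simp: mem_interior)
    define d where "d = - J y"
    have dn: "d \<noteq> 0" using yn by (simp add: d_def J_zero_iff)
    define k where "k = r/2/norm d"
    have k: "k > 0" using r dn by (simp add: k_def)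
    have w: "p + k *\<^sub>R d \<in> X" using ball_step[OF r(2) r(1) dn] by (simp add: k_def)
    have "symp (p + k *\<^sub>R d) y = symp p y + k * inner y y"
      by (simp add: symp_def d_def J_add J_diff J_scale J_minus J_J inner_add_left inner_diff_left)
    also have "\<dots> > 1" using py k yn by simp
    finally show False using polar_le[OF w y] by simp
  qed
  moreover have "y \<notin> interior X"
  proof
    assume "y \<in> interior X"
    then obtain r where r: "r > 0" "ball y r \<subseteq> X" by (auto simp: mem_interior)
    define d where "d = J p"
    have dn: "d \<noteq> 0" using pn by (simp add: d_def J_zero_iff)
    define k where "k = r/2/norm d"
    have k: "k > 0" using r dn by (simp add: k_def)
    have w: "y + k *\<^sub>R d \<in> X" using ball_step[OF r(2) r(1) dn] by (simp add: k_def)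
    have "symp p (y + k *\<^sub>R d) = symp p y + k * inner p p"
      by (simp add: symp_def d_def inner_add_right J_inner_J)
    also have "\<dots> > 1" using py k pn by simp
    finally show False using polar_le[OF p w] by simp
  qed
  ultimately show ?thesis using p y frontier_iff by blast
qed

lemma exists_dual:
  assumes p: "p \<in> frontier X"
  shows "\<exists>y\<in>X. symp p y = 1"
proof -
  have ri: "rel_interior X = interior X" using zint rel_interior_nonempty_interior by blast
  have pc: "p \<in> closure X" using p frontier_iff closure_closed closedX by auto
  have pr: "p \<notin> rel_interior X" using p frontier_iff ri by auto
  obtain a where a: "a \<noteq> 0" "\<And>y. y \<in> closure X \<Longrightarrow> inner a p \<le> inner a y"
      "\<And>y. y \<in> rel_interior X \<Longrightarrow> inner a p < inner a y"
    by (rule supporting_hyperplane_relative_frontier[OF cvx pc pr], rule that, assumption+)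
  define N where "N = - a"
  have N0: "N \<noteq> 0" using a by (simp add: N_def)
  have Nle: "inner N w \<le> inner N p" if "w \<in> X" for w
    using a(2)[of w] that closure_closed closedX by (simp add: N_def)
  obtain r where r: "r > 0" "ball 0 r \<subseteq> X" using zint by (auto simp: mem_interior)
  have w: "0 + (r/2/norm N) *\<^sub>R N \<in> X" using ball_step[OF r(2) r(1) N0] .
  have "inner N ((r/2/norm N) *\<^sub>R N) = r/2 * norm N"
    using N0 by (simp add: power2_norm_eq_inner[symmetric] power2_eq_square)
  moreover have "r/2 * norm N > 0" using r N0 by simp
  moreover have w': "(r/2/norm N) *\<^sub>R N \<in> X" using w by (simp only: add_0_left)
  moreover have "inner N ((r/2/norm N) *\<^sub>R N) \<le> inner N p" by (rule Nle[OF w'])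
  ultimately have Np: "inner N p > 0" by linarith
  define c where "c = 1 / inner N p"
  define y where "y = J (c *\<^sub>R N)"
  have "y \<in> X"
  proof (rule inpolar)
    fix w assume "w \<in> X"
    have "symp w y = c * inner w N" by (simp add: symp_def y_def J_inner_J)
    also have "\<dots> \<le> c * inner N p" using Nle[OF \<open>w \<in> X\<close>] Np
      by (simp add: c_def inner_commute mult_left_mono)
    also have "\<dots> = 1" using Np by (simp add: c_def)
    finally show "symp w y \<le> 1" .
  qed
  moreover have "symp p y = 1" using Np by (simp add: symp_def y_def J_inner_J c_def inner_commute)
  ultimately show ?thesis by blast
qed

lemma normal_of_dual:
  assumes "y \<in> X" "symp p y = 1"
  shows "\<forall>w\<in>X. inner (- J y) w \<le> inner (- J y) p" "inner (- J y) p = 1" "- J y \<noteq> 0"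
proof -
  show "\<forall>w\<in>X. inner (- J y) w \<le> inner (- J y) p"
    using assms polar_le by (simp only: negJ_inner) auto
  show "inner (- J y) p = 1" using assms by (simp only: negJ_inner)
  have "y \<noteq> 0" using assms by (auto simp: symp_def)
  then show "- J y \<noteq> 0" by (simp add: J_zero_iff)
qed

lemma tangent_char:
  assumes p: "p \<in> frontier X" and N0: "N \<noteq> 0" and N: "\<forall>w\<in>X. inner N w \<le> inner N p"
  shows "tangent_space (frontier X) p = {v. inner N v = 0}"
proof -
  have ex: "\<exists>U g G. open U \<and> p \<in> U \<and>
      (\<forall>y\<in>U. (g has_derivative (\<lambda>v. inner (G y) v)) (at y)) \<and>
      continuous_on U G \<and> G p \<noteq> 0 \<and>
      frontier X \<inter> U = {y\<in>U. g y = (0::real)}"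
    by (rule bspec[OF c1[unfolded C1_boundary_def] p])
  then obtain U g G where H: "open U \<and> p \<in> U \<and>
      (\<forall>y\<in>U. (g has_derivative (\<lambda>v. inner (G y) v)) (at y)) \<and>
      continuous_on U G \<and> G p \<noteq> 0 \<and>
      frontier X \<inter> U = {y\<in>U. g y = (0::real)}"
    by (elim exE) (rule that)
  have U1: "open U" using H by (elim conjE) assumption
  have U2: "p \<in> U" using H by (elim conjE) assumption
  note U = U1 U2
  have gd: "\<forall>y\<in>U. (g has_derivative (\<lambda>v. inner (G y) v)) (at y)" using H by (elim conjE) assumption
  have G0: "G p \<noteq> 0" using H by (elim conjE) assumption
  have SU: "frontier X \<inter> U = {y\<in>U. g y = (0::real)}" using H by (elim conjE) assumption
  have sub1: "tangent_space (frontier X) p \<subseteq> {v. inner N v = 0}"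
    using tangent_sub_normal[OF frontier_sub N] by blast
  have sub2: "{v. inner (G p) v = 0} \<subseteq> tangent_space (frontier X) p"
    using tangent_super[OF frontier_closed p U gd SU G0] by blast
  have orth: "\<forall>v. inner (G p) v = 0 \<longrightarrow> inner N v = 0"
  proof (intro allI impI)
    fix v assume "inner (G p) v = 0"
    then have "v \<in> tangent_space (frontier X) p" using sub2 by blast
    then show "inner N v = 0" using sub1 by blast
  qed
  define c where "c = inner N (G p) / inner (G p) (G p)"
  have c: "N = c *\<^sub>R G p" using orth_parallel[OF G0 orth] by (simp add: c_def)
  then have "c \<noteq> 0" using N0 by auto
  then have "{v. inner N v = 0} \<subseteq> {v. inner (G p) v = 0}" using c by auto
  then show ?thesis using sub1 sub2 by blast
qed

lemma dual_unique:
  assumes p: "p \<in> frontier X" and y1: "y1 \<in> X" "symp p y1 = 1" and y2: "y2 \<in> X" "symp p y2 = 1"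
  shows "y1 = y2"
proof -
  note n1 = normal_of_dual[OF y1] and n2 = normal_of_dual[OF y2]
  have T1: "tangent_space (frontier X) p = {v. inner (- J y1) v = 0}" using tangent_char[OF p n1(3) n1(1)] .
  have T2: "tangent_space (frontier X) p = {v. inner (- J y2) v = 0}" using tangent_char[OF p n2(3) n2(1)] .
  have orth: "\<forall>v. inner (- J y1) v = 0 \<longrightarrow> inner (- J y2) v = 0"
  proof (intro allI impI)
    fix v assume "inner (- J y1) v = 0"
    then have "v \<in> tangent_space (frontier X) p" using T1 by simp
    then show "inner (- J y2) v = 0" using T2 by simp
  qed
  define c where "c = inner (- J y2) (- J y1) / inner (- J y1) (- J y1)"
  have c: "- J y2 = c *\<^sub>R (- J y1)" using orth_parallel[OF n1(3) orth] by (simp add: c_def)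
  then have "inner (- J y2) p = c * inner (- J y1) p" by simp
  then have "c = 1" using n1(2) n2(2) by simp
  then have "J (y1 - y2) = 0" using c by (simp add: J_diff)
  then show ?thesis by (simp add: J_zero_iff)
qed

definition "fm = polar_map X"

lemma f_prop: assumes p: "p \<in> frontier X" shows "fm p \<in> X \<and> symp p (fm p) = 1"
proof -
  obtain y where y: "y \<in> X" "symp p y = 1" using exists_dual[OF p] by blast
  have ex1: "\<exists>!y. y \<in> symp_polar X \<and> symp p y = 1"
  proof (rule ex1I[of _ y])
    show "y \<in> symp_polar X \<and> symp p y = 1" using y sp by simp
  next
    fix y' assume y': "y' \<in> symp_polar X \<and> symp p y' = 1"
    then have "y' \<in> X" using sp by simp
    then show "y' = y" using dual_unique[OF p _ _ y(1) y(2)] y' by blast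
  qed
  have "(THE y. y \<in> symp_polar X \<and> symp p y = 1) \<in> symp_polar X \<and>
      symp p (THE y. y \<in> symp_polar X \<and> symp p y = 1) = 1"
    by (rule theI'[OF ex1])
  then show ?thesis unfolding fm_def polar_map_def using sp by simp
qed

lemma f_eq: assumes p: "p \<in> frontier X" and y: "y \<in> X" "symp p y = 1" shows "fm p = y"
proof -
  have "fm p \<in> X" "symp p (fm p) = 1" using f_prop[OF p] by auto
  then show ?thesis using dual_unique[OF p _ _ y] by blast
qed

lemma f_frontier: assumes p: "p \<in> frontier X" shows "fm p \<in> frontier X"
proof -
  have pX: "p \<in> X" using p frontier_sub by blast
  have "fm p \<in> X" "symp p (fm p) = 1" using f_prop[OF p] by auto
  then show ?thesis using not_interior[OF pX] by blast
qed

lemma ff: assumes p: "p \<in> frontier X" shows "fm (fm p) = - p"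
proof -
  have sy: "symp (fm p) (- p) = 1" using f_prop[OF p] by (simp add: symp_neg_right)
  have pX: "p \<in> X" using p frontier_sub by blast
  have negp: "- p \<in> X" by (rule neg_mem[OF pX])
  show ?thesis by (rule f_eq[OF f_frontier[OF p] negp sy])
qed

lemma char_f: assumes x: "x \<in> frontier X" shows "x \<in> char_line X (fm x)"
proof -
  have xn: "J x \<noteq> 0" using frontier_nz[OF x] by (simp add: J_zero_iff)
  have N: "\<forall>w\<in>X. inner (J x) w \<le> inner (J x) (fm x)"
  proof
    fix w assume w: "w \<in> X"
    have xX: "x \<in> X" using x frontier_sub by blast
    have "symp x w \<le> symp x (fm x)" using f_prop[OF x] polar_le[OF xX w] by simp
    then show "inner (J x) w \<le> inner (J x) (fm x)" by (simp only: symp_def)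
  qed
  have T: "tangent_space (frontier X) (fm x) = {v. inner (J x) v = 0}"
    using tangent_char[OF f_frontier[OF x] xn N] .
  show ?thesis unfolding char_line_def T by (simp add: J_self symp_def)
qed

lemma char_dir: assumes p: "p \<in> frontier X" and u: "u \<in> char_line X p"
  shows "\<exists>c. u = c *\<^sub>R fm p"
proof -
  note n = normal_of_dual[OF conjunct1[OF f_prop[OF p]] conjunct2[OF f_prop[OF p]]]
  have T: "tangent_space (frontier X) p = {v. inner (- J (fm p)) v = 0}"
    using tangent_char[OF p n(3) n(1)] .
  have "\<forall>v. inner (- J (fm p)) v = 0 \<longrightarrow> inner (J u) v = 0"
    using u unfolding char_line_def T by (auto simp: symp_def)
  then have "J u = (inner (J u) (- J (fm p)) / inner (- J (fm p)) (- J (fm p))) *\<^sub>R (- J (fm p))"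
    by (rule orth_parallel[OF n(3)])
  then obtain c where c: "J u = c *\<^sub>R (- J (fm p))" by blast
  then have "J (u - (- c) *\<^sub>R fm p) = 0" by (simp add: J_add J_diff J_scale)
  then have "u = (- c) *\<^sub>R fm p" by (simp only: J_zero_iff right_minus_eq)
  then show ?thesis by blast
qed


lemma symp_add_left: "symp (a + b) c = symp a c + symp b (c::complex^'n)"
  by (simp add: symp_def J_add inner_add_left)
lemma symp_add_right: "symp a (b + c) = symp a b + symp a (c::complex^'n)"
  by (simp add: symp_def inner_add_right)
lemma symp_scale_right: "symp a (k *\<^sub>R b) = k * symp a (b::complex^'n)"
  by (simp add: symp_def)
lemma symp_neg_left: "symp (- a) b = symp b (a::complex^'n)"
  using symp_anti[of b a] by (simp add: symp_def J_minus)

lemma billiard: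
  assumes x: "x \<in> frontier X"
  shows "outer_billiard X (x + fm x) = fm x + fm (fm x)"
proof -
  define z where "z = x + fm x"
  have xX: "x \<in> X" using x frontier_sub by blast
  have fx: "fm x \<in> X" "symp x (fm x) = 1" using f_prop[OF x] by auto
  have "(THE q. q \<in> frontier X \<and> z - q \<in> char_line X q \<and> symp q (q - z) > 0) = fm x"
  proof (rule the_equality)
    have "z - fm x = x" by (simp add: z_def)
    moreover have "symp (fm x) (fm x - z) = 1"
      using fx(2) by (simp add: z_def symp_neg_right)
    ultimately show "fm x \<in> frontier X \<and> z - fm x \<in> char_line X (fm x) \<and> symp (fm x) (fm x - z) > 0"
      using f_frontier[OF x] char_f[OF x] by simp
  next
    fix p assume p: "p \<in> frontier X \<and> z - p \<in> char_line X p \<and> symp p (p - z) > 0"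
    have pf: "p \<in> frontier X" using p by blast
    have pX: "p \<in> X" using pf frontier_sub by blast
    obtain c where c: "z - p = c *\<^sub>R fm p" using char_dir pf p by blast
    define y where "y = fm p"
    have yX: "y \<in> X" and py: "symp p y = 1" using f_prop[OF pf] y_def by auto
    have zp: "z = p + c *\<^sub>R y" using c y_def by (metis add.commute diff_add_cancel)
    have "symp p (p - z) = - c" using py by (simp add: zp symp_def)
    then have cneg: "c < 0" using p by simp
    have yy: "symp y y = 0" by (rule symp_self)
    have A: "symp z y = 1" using py yy by (simp add: zp symp_add_left symp_anti[of "c *\<^sub>R y" y] symp_scale_right)
    have B: "symp z y = symp x y + symp (fm x) y" by (simp add: z_def symp_add_left)
    have "symp (fm x) y \<le> 1" using polar_le[OF fx(1) yX] .
    then have xy1: "symp x y \<ge> 0" using A B by simp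
    have C1: "symp z x = - 1" using fx(2) by (simp add: z_def symp_add_left symp_self symp_anti[of "fm x" x])
    have C2: "symp z x = symp p x + c * symp y x"
      by (simp add: zp symp_add_left symp_anti[of "c *\<^sub>R y" x] symp_anti[of y x] symp_scale_right)
    have "symp p (- x) \<le> 1" using polar_le[OF pX neg_mem[OF xX]] .
    then have "symp x p \<le> 1" by (simp add: symp_neg_right)
    then have "- symp p x \<le> 1" using symp_anti[of x p] by simp
    then have "c * symp y x \<le> 0" using C1 C2 by simp
    then have "symp y x \<ge> 0" using cneg by (simp add: mult_le_0_iff)
    then have "symp x y \<le> 0" using symp_anti[of x y] by simp
    then have "symp x y = 0" using xy1 by simp
    then have "symp (fm x) y = 1" using A B by simp
    then have "symp y (- fm x) = 1" by (simp add: symp_neg_right)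
    then have "fm y = - fm x" using f_eq[OF f_frontier[OF pf]] neg_mem[OF fx(1)] y_def by blast
    moreover have "fm y = - p" using ff[OF pf] y_def by simp
    ultimately show "p = fm x" by simp
  qed
  then have "outer_billiard X z = 2 *\<^sub>R fm x - z" by (simp add: outer_billiard_def Let_def)
  also have "\<dots> = fm x + fm (fm x)" using ff[OF x] by (simp add: z_def algebra_simps scaleR_2)
  finally show ?thesis by (simp add: z_def)
qed

end

lemma mainTheorem6_aux:
  fixes X :: "(complex^'n) set"
  assumes "convex_body X" and "symp_polar X = X" and "C1_boundary X"
  defines "f \<equiv> polar_map X" and "T \<equiv> outer_billiard X"
      and "Y \<equiv> (\<lambda>x. x + polar_map X x) ` frontier X"
  shows "Y \<subseteq> - X \<and> T ` Y = Y \<and> (\<forall>x\<in>frontier X. T (x + f x) = f x + f (f x))"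
proof -
  interpret S: SPB X using assms(1-3) by unfold_locales
  have fe: "f = S.fm" by (simp add: f_def S.fm_def)
  have Ye: "Y = (\<lambda>x. x + S.fm x) ` frontier X" by (simp add: Y_def S.fm_def)
  have TB: "\<forall>x\<in>frontier X. T (x + f x) = f x + f (f x)"
    using S.billiard by (simp add: fe T_def)
  have "Y \<subseteq> - X"
  proof
    fix q assume "q \<in> Y"
    then obtain x where x: "x \<in> frontier X" and q: "q = x + S.fm x" using Ye by blast
    show "q \<in> - X"
    proof
      assume qX: "q \<in> X"
      have "symp x q = 1" using S.f_prop[OF x] by (simp add: q S.symp_add_right symp_self)
      then have "S.fm x = q" using S.f_eq[OF x qX] by blast
      then show False using q S.frontier_nz[OF x] by simp
    qed
  qed
  moreover have "T ` Y = Y"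
  proof
    show "T ` Y \<subseteq> Y"
    proof
      fix q assume "q \<in> T ` Y"
      then obtain x where x: "x \<in> frontier X" and q: "q = T (x + S.fm x)" using Ye by blast
      have "q = S.fm x + S.fm (S.fm x)" using TB x q fe by simp
      then show "q \<in> Y" using Ye S.f_frontier[OF x] by blast
    qed
  next
    show "Y \<subseteq> T ` Y"
    proof
      fix q assume "q \<in> Y"
      then obtain x where x: "x \<in> frontier X" and q: "q = x + S.fm x" using Ye by blast
      define w where "w = - S.fm x"
      have xX: "x \<in> X" using x S.frontier_sub by blast
      have fx: "S.fm x \<in> X" "symp x (S.fm x) = 1" using S.f_prop[OF x] by auto
      have wX: "w \<in> X" using S.neg_mem[OF fx(1)] w_def by simp
      have wx: "symp w x = 1" using fx(2) by (simp add: w_def S.symp_neg_left)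
      have wf: "w \<in> frontier X" using S.not_interior[OF wX xX wx] by blast
      have fw: "S.fm w = x" using S.f_eq[OF wf xX wx] .
      have "T (w + S.fm w) = S.fm w + S.fm (S.fm w)" using TB wf fe by simp
      also have "\<dots> = q" using fw q w_def S.ff[OF x] by simp
      finally have "q = T (w + S.fm w)" by simp
      moreover have "w + S.fm w \<in> Y" using Ye wf by blast
      ultimately show "q \<in> T ` Y" by blast
    qed
  qed
  ultimately show ?thesis using TB by blast
qed

theorem mainTheorem6:
  fixes X :: "(complex^'n) set"
  assumes "convex_body X" and "symp_polar X = X" and "C1_boundary X"
  defines "f \<equiv> polar_map X" and "T \<equiv> outer_billiard X"
      and "Y \<equiv> (\<lambda>x. x + polar_map X x) ` frontier X"
  shows "Y \<subseteq> - X \<and> T ` Y = Y \<and> (\<forall>x\<in>frontier X. T (x + f x) = f x + f (f x))"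
  using mainTheorem6_aux[OF assms(1-3)] unfolding f_def T_def Y_def .

end
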